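(* Let $g\in U_n$. There exists $\zeta\in\mathfrak{u}_n$ with $\exp(\zeta)=g$ such that $[\zeta,\xi]=0$ for every $\xi\in\mathfrak{u}_n$ with $\exp(\xi)=g$.
   Context: $\mathfrak{u}_n$ is the Lie algebra of $U_n$ (skew-Hermitian $n\times n$ matrices) and $\exp$ is the matrix exponential. *)

theory Defs
  imports "HOL-Analysis.Analysis"
begin

text \<open>n x n complex matrices are represented as complex^'n^'n, with n = CARD('n).\<close>

primrec mpow :: "complex^'n^'n \<Rightarrow> nat \<Rightarrow> complex^'n^'n" where
  "mpow A 0 = mat 1"
| "mpow A (Suc k) = A ** mpow A k"

definition mexp :: "complex^'n^'n \<Rightarrow> complex^'n^'n" where
  "mexp A = (\<Sum>k. (1 / fact k) *\<^sub>R mpow A k)"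

definition ctrans :: "complex^'n^'n \<Rightarrow> complex^'n^'n" where
  "ctrans A = (\<chi> i j. cnj (A $ j $ i))"

definition unitary_group :: "(complex^'n^'n) set" where
  "unitary_group = {A. ctrans A ** A = mat 1 \<and> A ** ctrans A = mat 1}"

definition unitary_lie_algebra :: "(complex^'n^'n) set" where
  "unitary_lie_algebra = {X. ctrans X = - X}"

definition mbracket :: "complex^'n^'n \<Rightarrow> complex^'n^'n \<Rightarrow> complex^'n^'n" where
  "mbracket X Y = X ** Y - Y ** X"

end

theory Submission
  imports Defs
begin

definition cinner :: "complex^'n \<Rightarrow> complex^'n \<Rightarrow> complex" where
  "cinner x y = (\<Sum>i\<in>UNIV. cnj (x$i) * y$i)"

lemma cinner_add_right: "cinner x (y + z) = cinner x y + cinner x z"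
  by (simp add: cinner_def distrib_left sum.distrib)
lemma cinner_add_left: "cinner (x + y) z = cinner x z + cinner y z"
  by (simp add: cinner_def distrib_right sum.distrib)
lemma cinner_diff_right: "cinner x (y - z) = cinner x y - cinner x z"
  by (simp add: cinner_def right_diff_distrib sum_subtractf)
lemma cinner_diff_left: "cinner (x - y) z = cinner x z - cinner y z"
  by (simp add: cinner_def left_diff_distrib sum_subtractf)
lemma cinner_scale_right: "cinner x (c *s y) = c * cinner x y"
  by (simp add: cinner_def sum_distrib_left algebra_simps)
lemma cinner_scale_left: "cinner (c *s x) y = cnj c * cinner x y"
  by (simp add: cinner_def sum_distrib_left algebra_simps)
lemma cinner_zero_right[simp]: "cinner x 0 = 0"
  by (simp add: cinner_def)
lemma cinner_zero_left[simp]: "cinner 0 x = 0"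
  by (simp add: cinner_def)
lemma cinner_sum_right: "cinner x (\<Sum>u\<in>U. f u) = (\<Sum>u\<in>U. cinner x (f u))"
  by (induction U rule: infinite_finite_induct) (auto simp: cinner_add_right)
lemma cinner_cnj: "cnj (cinner x y) = cinner y x"
  by (simp add: cinner_def mult.commute)
lemma cinner_ctrans: "cinner x (A *v y) = cinner (ctrans A *v x) y"
proof -
  have "cinner x (A *v y) = (\<Sum>i\<in>UNIV. \<Sum>j\<in>UNIV. cnj (x$i) * (A$i$j * y$j))"
    by (simp add: cinner_def matrix_vector_mult_def sum_distrib_left)
  also have "\<dots> = (\<Sum>j\<in>UNIV. \<Sum>i\<in>UNIV. cnj (x$i) * (A$i$j * y$j))"
    by (rule sum.swap)
  also have "\<dots> = cinner (ctrans A *v x) y"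
    by (simp add: cinner_def matrix_vector_mult_def ctrans_def sum_distrib_right sum_distrib_left mult_ac)
  finally show ?thesis .
qed

lemma cinner_self: "cinner x x = of_real ((norm x)^2)"
proof -
  have eq: "(norm x)^2 = (\<Sum>i\<in>UNIV. (cmod (x$i))^2)"
    by (simp add: norm_vec_def L2_set_def sum_nonneg)
  have "cinner x x = (\<Sum>i\<in>UNIV. of_real ((cmod (x$i))^2))"
    unfolding cinner_def by (intro sum.cong refl) (simp add: complex_norm_square mult.commute del: of_real_power)
  also have "\<dots> = of_real (\<Sum>i\<in>UNIV. (cmod (x$i))^2)" by (simp only: of_real_sum)
  finally show ?thesis unfolding eq .
qed

lemma cinner_self_eq_0[simp]: "cinner x x = 0 \<longleftrightarrow> x = 0"
proof -
  have "cinner x x = 0 \<longleftrightarrow> (norm x)^2 = 0" unfolding cinner_self by (simp only: of_real_eq_0_iff)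
  then show ?thesis by simp
qed

lemma mv_scale: "A *v (c *s x) = c *s (A *v (x::complex^'n))"
  by (simp add: vec_eq_iff matrix_vector_mult_def sum_distrib_left algebra_simps)

lemma mv_sum: "A *v (\<Sum>u\<in>U. f u) = (\<Sum>u\<in>U. A *v f u)"
  by (induction U rule: infinite_finite_induct) (auto simp: matrix_vector_right_distrib)

lemma vec_expand_eq:
  fixes A B :: "complex^'n^'n"
  assumes "\<forall>w. w = (\<Sum>u\<in>U. cinner u w *s u)" "\<forall>u\<in>U. A *v u = B *v u"
  shows "A = B"
proof -
  have "A *v w = B *v w" for w
  proof -
    have "A *v w = (\<Sum>u\<in>U. cinner u w *s (A *v u))"
      by (subst assms(1)[rule_format, of w]) (simp add: mv_sum mv_scale)
    also have "\<dots> = (\<Sum>u\<in>U. cinner u w *s (B *v u))"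
      using assms(2) by (intro sum.cong refl) simp
    also have "\<dots> = B *v w"
      by (subst (2) assms(1)[rule_format, of w]) (simp add: mv_sum mv_scale)
    finally show ?thesis .
  qed
  then show ?thesis by (simp add: matrix_eq)
qed

lemma scaleR_sv: "r *\<^sub>R x = (of_real r) *s (x::complex^'n)"
proof -
  have "(r *\<^sub>R x)$i = ((of_real r) *s x) $ i" for i
  proof -
    have "(r *\<^sub>R x)$i = r *\<^sub>R (x$i)" by (rule vector_scaleR_component)
    also have "\<dots> = of_real r * x$i" by (rule scaleR_conv_of_real)
    also have "\<dots> = ((of_real r) *s x) $ i" by (rule vector_smult_component[symmetric])
    finally show ?thesis .
  qed
  then show ?thesis unfolding vec_eq_iff by blast
qed

lemma norm_le_l1': "norm x \<le> (\<Sum>i\<in>UNIV. norm (x$i))"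
  unfolding norm_vec_def by (rule L2_set_le_sum) simp

lemma bounded_linear_vec_comp:
  fixes F :: "'a::real_normed_vector \<Rightarrow> 'b::real_normed_vector ^'n"
  assumes "\<And>i. bounded_linear (\<lambda>x. F x $ i)"
  shows "bounded_linear F"
proof -
  have lin: "linear (\<lambda>x. F x $ i)" for i using assms bounded_linear.linear by blast
  obtain K where K: "\<And>i x. norm (F x $ i) \<le> norm x * K i"
    using assms[THEN bounded_linear.bounded] by metis
  show ?thesis
  proof (rule bounded_linear_intro[where K="\<Sum>i\<in>UNIV. K i"])
    show "F (x + y) = F x + F y" for x y
      by (simp add: vec_eq_iff linear_add[OF lin])
    show "F (r *\<^sub>R x) = r *\<^sub>R F x" for r x
      by (simp add: vec_eq_iff linear_scale[OF lin])
    show "norm (F x) \<le> norm x * (\<Sum>i\<in>UNIV. K i)" for x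
    proof -
      have "norm (F x) \<le> (\<Sum>i\<in>UNIV. norm (F x $ i))" by (rule norm_le_l1')
      also have "\<dots> \<le> (\<Sum>i\<in>UNIV. norm x * K i)" by (intro sum_mono K)
      finally show ?thesis by (simp add: sum_distrib_left)
    qed
  qed
qed

lemma bl_entry: "bounded_linear (\<lambda>M::complex^'n^'m. M $ i $ j)"
  using bounded_linear_compose[OF bounded_linear_vec_nth[of j] bounded_linear_vec_nth[of i]] by simp

lemma bl_mult_right: "bounded_linear (\<lambda>M::complex^'n^'n. M ** X)"
  apply (rule bounded_linear_vec_comp)+
  apply (simp add: matrix_matrix_mult_def)
  apply (rule bounded_linear_sum)
  apply (rule bounded_linear_compose[OF bounded_linear_mult_left bl_entry])
  done

lemma bl_mult_left: "bounded_linear (\<lambda>M::complex^'n^'n. X ** M)"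
  apply (rule bounded_linear_vec_comp)+
  apply (simp add: matrix_matrix_mult_def)
  apply (rule bounded_linear_sum)
  apply (rule bounded_linear_compose[OF bounded_linear_mult_right bl_entry])
  done

lemma bl_mv: "bounded_linear (\<lambda>M::complex^'n^'n. M *v u)"
  apply (rule bounded_linear_vec_comp)+
  apply (simp add: matrix_vector_mult_def)
  apply (rule bounded_linear_sum)
  apply (rule bounded_linear_compose[OF bounded_linear_mult_left bl_entry])
  done

lemma bl_sv: "bounded_linear (\<lambda>z::complex. z *s (u::complex^'n))"
  apply (rule bounded_linear_vec_comp)
  apply (simp add: bounded_linear_mult_left)
  done

lemma norm_mm_le:
  fixes A B :: "complex^'n^'n"
  shows "norm (A ** B) \<le> (real CARD('n))^3 * (norm A * norm B)"
proof -
  have e: "norm ((A ** B) $ i $ j) \<le> real CARD('n) * (norm A * norm B)" for i j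
  proof -
    have "(A ** B) $ i $ j = (\<Sum>k\<in>UNIV. A$i$k * B$k$j)"
      unfolding matrix_matrix_mult_def by (simp only: vec_lambda_beta)
    then have "norm ((A ** B) $ i $ j) \<le> (\<Sum>k\<in>UNIV. norm (A$i$k * B$k$j))"
      by (simp only: norm_sum)
    also have "\<dots> \<le> (\<Sum>k\<in>(UNIV::'n set). norm A * norm B)"
    proof (intro sum_mono)
      fix k
      have "norm (A$i$k) \<le> norm A" by (rule order_trans[OF Finite_Cartesian_Product.norm_nth_le Finite_Cartesian_Product.norm_nth_le])
      moreover have "norm (B$k$j) \<le> norm B" by (rule order_trans[OF Finite_Cartesian_Product.norm_nth_le Finite_Cartesian_Product.norm_nth_le])
      ultimately show "norm (A$i$k * B$k$j) \<le> norm A * norm B"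
        by (simp add: norm_mult mult_mono)
    qed
    also have "\<dots> = real CARD('n) * (norm A * norm B)" by (simp only: sum_constant)
    finally show ?thesis .
  qed
  have "norm (A ** B) \<le> (\<Sum>i\<in>UNIV. norm ((A ** B) $ i))" by (rule norm_le_l1')
  also have "\<dots> \<le> (\<Sum>i\<in>UNIV. \<Sum>j\<in>UNIV. norm ((A ** B) $ i $ j))"
    by (intro sum_mono norm_le_l1')
  also have "\<dots> \<le> (\<Sum>i\<in>(UNIV::'n set). \<Sum>j\<in>(UNIV::'n set). real CARD('n) * (norm A * norm B))"
    by (intro sum_mono e)
  also have "\<dots> = (real CARD('n))^3 * (norm A * norm B)"
    by (simp only: sum_constant power3_eq_cube mult.assoc)
  finally show ?thesis .
qed

lemma norm_mpow_le:
  fixes A :: "complex^'n^'n"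
  shows "norm (mpow A k) \<le> ((real CARD('n))^3 * norm A)^k * norm (mat 1 :: complex^'n^'n)"
proof (induction k)
  case 0 then show ?case by simp
next
  case (Suc k)
  have "norm (mpow A (Suc k)) \<le> (real CARD('n))^3 * (norm A * norm (mpow A k))"
    by (simp add: norm_mm_le)
  also have "\<dots> \<le> (real CARD('n))^3 * (norm A * (((real CARD('n))^3 * norm A)^k * norm (mat 1 :: complex^'n^'n)))"
    by (intro mult_left_mono Suc) auto
  also have "\<dots> = ((real CARD('n))^3 * norm A)^(Suc k) * norm (mat 1 :: complex^'n^'n)"
    by (simp only: power_Suc mult_ac)
  finally show ?case .
qed

lemma summable_mexp: "summable (\<lambda>k. (1 / fact k) *\<^sub>R mpow (A::complex^'n^'n) k)"
proof (rule summable_comparison_test)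
  let ?c = "(real CARD('n))^3 * norm A"
  show "\<exists>N. \<forall>n\<ge>N. norm ((1 / fact n) *\<^sub>R mpow A n) \<le> norm (mat 1 :: complex^'n^'n) * (?c^n /\<^sub>R fact n)"
    using norm_mpow_le[of A] by (auto simp: divide_simps mult.commute)
  show "summable (\<lambda>n. norm (mat 1 :: complex^'n^'n) * (?c^n /\<^sub>R fact n))"
    by (intro summable_mult summable_exp_generic)
qed

lemma mpow_commute: "X ** mpow X k = mpow X k ** X"
  by (induction k) (simp_all add: matrix_mul_assoc)

lemma mexp_commute: "X ** mexp X = mexp X ** (X::complex^'n^'n)"
proof -
  have "X ** mexp X = (\<Sum>k. X ** ((1 / fact k) *\<^sub>R mpow X k))"
    unfolding mexp_def by (rule bounded_linear.suminf[OF bl_mult_left summable_mexp])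
  also have "\<dots> = (\<Sum>k. ((1 / fact k) *\<^sub>R mpow X k) ** X)"
  proof (rule arg_cong[where f=suminf], rule ext)
    fix k
    show "X ** ((1 / fact k) *\<^sub>R mpow X k) = ((1 / fact k) *\<^sub>R mpow X k) ** X"
      unfolding linear_scale[OF bounded_linear.linear[OF bl_mult_left]]
        linear_scale[OF bounded_linear.linear[OF bl_mult_right, of X]] mpow_commute ..
  qed
  also have "\<dots> = mexp X ** X"
    unfolding mexp_def by (rule bounded_linear.suminf[OF bl_mult_right summable_mexp, symmetric])
  finally show ?thesis .
qed

lemma mpow_eig: "A *v u = c *s u \<Longrightarrow> mpow A k *v u = c^k *s u"
  by (induction k) (simp_all add: matrix_vector_mul_assoc[symmetric] mv_scale vector_smult_assoc mult.commute)

lemma mexp_eig: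
  assumes "A *v u = c *s u"
  shows "mexp A *v u = exp c *s (u::complex^'n)"
proof -
  have "mexp A *v u = (\<Sum>k. ((1 / fact k) *\<^sub>R mpow A k) *v u)"
    unfolding mexp_def by (rule bounded_linear.suminf[OF bl_mv summable_mexp])
  also have "\<dots> = (\<Sum>k. (c^k /\<^sub>R fact k) *s u)"
  proof (rule arg_cong[where f=suminf], rule ext)
    fix k
    have "((1 / fact k) *\<^sub>R mpow A k) *v u = (1 / fact k) *\<^sub>R (mpow A k *v u)"
      by (rule linear_scale[OF bounded_linear.linear[OF bl_mv]])
    also have "\<dots> = (1 / fact k) *\<^sub>R (c^k *s u)" by (simp add: mpow_eig[OF assms])
    also have "\<dots> = (c^k /\<^sub>R fact k) *s u"
    proof -
      have e: "c^k /\<^sub>R fact k = of_real (1 / fact k) * c^k"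
        by (simp add: scaleR_conv_of_real field_simps)
      show ?thesis by (simp only: scaleR_sv e vector_smult_assoc)
    qed
    finally show "((1 / fact k) *\<^sub>R mpow A k) *v u = (c^k /\<^sub>R fact k) *s u" .
  qed
  also have "\<dots> = exp c *s u"
    unfolding exp_def by (rule bounded_linear.suminf[OF bl_sv summable_exp_generic, symmetric])
  finally show ?thesis .
qed

definition csub :: "(complex^'n) set \<Rightarrow> bool" where
  "csub S \<longleftrightarrow> 0 \<in> S \<and> (\<forall>x\<in>S. \<forall>y\<in>S. x + y \<in> S) \<and> (\<forall>c. \<forall>x\<in>S. c *s x \<in> S)"


lemma csub_subspace: "csub S \<Longrightarrow> subspace S"
  unfolding csub_def subspace_def scaleR_sv by blast

lemma csub_add: "csub S \<Longrightarrow> x \<in> S \<Longrightarrow> y \<in> S \<Longrightarrow> x + y \<in> S"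
  unfolding csub_def by blast
lemma csub_scale: "csub S \<Longrightarrow> x \<in> S \<Longrightarrow> c *s x \<in> S"
  unfolding csub_def by blast
lemma csub_0: "csub S \<Longrightarrow> 0 \<in> S"
  unfolding csub_def by blast
lemma csub_diff: assumes "csub S" "x \<in> S" "y \<in> S" shows "x - y \<in> S"
proof -
  have "x + (-1) *s y \<in> S" using csub_add[OF assms(1) assms(2) csub_scale[OF assms(1) assms(3)]] .
  moreover have "x + (-1) *s y = x - y" by (simp add: vec_eq_iff)
  ultimately show ?thesis by simp
qed

lemma quad_zero:
  fixes a b :: real
  assumes "\<And>t. 2*t*a + t^2*b \<le> 0"
  shows "a = 0"
proof -
  define d where "d = \<bar>b\<bar> + 1"
  have d: "d > 0" "2*d + b > 0" unfolding d_def by auto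
  have h: "2*(a/d)*a + (a/d)^2*b \<le> 0" using assms .
  have "2*(a/d)*a + (a/d)^2*b = a^2 * (2*d + b) / d^2"
    using d by (simp add: field_simps power2_eq_square)
  with h have "a^2 * (2*d + b) / d^2 \<le> 0" by simp
  then have "a^2 * (2*d + b) \<le> 0" using d by (simp add: divide_le_0_iff)
  then have "a^2 \<le> 0" using d by (simp add: mult_le_0_iff)
  then show ?thesis by simp
qed

lemma cinner_real_scale: "cinner (of_real r *s x) (H *v (of_real r *s x)) = of_real (r^2) * cinner x (H *v x)"
  by (simp add: cinner_scale_left cinner_scale_right mv_scale power2_eq_square)

lemma cont_quad: fixes H :: "complex^'n^'n" and K :: "(complex^'n) set"
  shows "continuous_on K (\<lambda>x. Re (cinner x (H *v x)))"
proof -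
  have c1: "continuous_on K (\<lambda>x::complex^'n. x$i)" for i
    by (rule linear_continuous_on[OF bounded_linear_vec_nth])
  have c2: "continuous_on K (\<lambda>x::complex^'n. (\<Sum>i\<in>UNIV. cnj (x$i) * (\<Sum>j\<in>UNIV. H$i$j * x$j)))"
  proof (rule continuous_on_sum)
    fix i
    have c3: "continuous_on K (\<lambda>x::complex^'n. \<Sum>j\<in>UNIV. H$i$j * x$j)"
    proof (rule continuous_on_sum)
      fix j show "continuous_on K (\<lambda>x::complex^'n. H$i$j * x$j)"
        by (rule continuous_on_mult[OF continuous_on_const c1])
    qed
    show "continuous_on K (\<lambda>x::complex^'n. cnj (x$i) * (\<Sum>j\<in>UNIV. H$i$j * x$j))"
      by (rule continuous_on_mult[OF bounded_linear.continuous_on[OF bounded_linear_cnj c1] c3])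
  qed
  have cf0: "continuous_on K (\<lambda>x::complex^'n. Re (\<Sum>i\<in>UNIV. cnj (x$i) * (\<Sum>j\<in>UNIV. H$i$j * x$j)))"
    using c2 by (rule bounded_linear.continuous_on[OF bounded_linear_Re])
  have feq: "(\<lambda>x. Re (cinner x (H *v x))) = (\<lambda>x::complex^'n. Re (\<Sum>i\<in>UNIV. cnj (x$i) * (\<Sum>j\<in>UNIV. H$i$j * x$j)))"
    by (rule ext) (simp only: cinner_def matrix_vector_mult_def vec_lambda_beta)
  show ?thesis unfolding feq by (rule cf0)
qed

lemma herm_eig:
  fixes H :: "complex^'n^'n"
  assumes herm: "ctrans H = H" and S: "csub S" and inv: "\<forall>x\<in>S. H *v x \<in> S"
    and ne: "x1 \<in> S" "x1 \<noteq> 0"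
  shows "\<exists>x\<in>S. x \<noteq> 0 \<and> (\<exists>c. H *v x = c *s x)"
proof -
  define f where "f = (\<lambda>x. Re (cinner x (H *v x)))"
  define K where "K = {x\<in>S. norm x = 1}"
  have sub: "subspace S" using csub_subspace[OF S] .
  have "K = S \<inter> sphere 0 1" unfolding K_def by auto
  then have cK: "compact K"
    using closed_Int_compact[OF closed_subspace[OF sub] compact_sphere] by simp
  have "(1 / norm x1) *\<^sub>R x1 \<in> K"
    unfolding K_def using ne subspace_scale[OF sub] by auto
  then have neK: "K \<noteq> {}" by auto
  have cf: "continuous_on K f"
    unfolding f_def by (rule cont_quad)
  obtain x0 where x0: "x0 \<in> K" and max: "\<And>y. y \<in> K \<Longrightarrow> f y \<le> f x0"
    using continuous_attains_sup[OF cK neK cf] by blast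
  define \<mu> where "\<mu> = f x0"
  have x0S: "x0 \<in> S" and nx0: "norm x0 = 1" using x0 unfolding K_def by auto
  have cx0: "cinner x0 x0 = 1" using nx0 by (simp add: cinner_self)
  have fscale: "f (of_real r *s y) = r^2 * f y" for r y
    unfolding f_def cinner_real_scale by (simp add: Re_complex_of_real)
  have bound: "f y \<le> \<mu> * (norm y)^2" if "y \<in> S" for y
  proof (cases "y = 0")
    case True then show ?thesis by (simp add: f_def)
  next
    case False
    define r where "r = 1 / norm y"
    have e: "of_real r *s y = r *\<^sub>R y" by (simp add: scaleR_sv)
    have "of_real r *s y \<in> K"
      unfolding K_def e using that False subspace_scale[OF sub that]
      by (auto simp: r_def)
    then have "f (of_real r *s y) \<le> \<mu>" using max \<mu>_def by blast
    then have "r^2 * f y \<le> \<mu>" by (simp add: fscale)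
    then show ?thesis using False by (simp add: r_def field_simps power2_eq_square)
  qed
  have key: "Re (cinner z (H *v x0)) = 0" if zS: "z \<in> S" and z0: "cinner x0 z = 0" for z
  proof -
    let ?a = "cinner z (H *v x0)"
    have zx0: "cinner z x0 = 0" using z0 cinner_cnj[of x0 z] by simp
    have hx: "cinner x0 (H *v z) = cnj ?a"
      by (simp add: cinner_ctrans herm cinner_cnj)
    have "2*t*Re ?a + t^2*(f z - \<mu> * (norm z)^2) \<le> 0" for t
    proof -
      define y where "y = x0 + of_real t *s z"
      have yS: "y \<in> S" unfolding y_def by (rule csub_add[OF S x0S csub_scale[OF S zS]])
      have fy: "f y = \<mu> + 2*t*Re ?a + t^2 * f z"
      proof -
        have "cinner y (H *v y) = cinner x0 (H *v x0) + of_real t * cinner x0 (H *v z)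
             + of_real t * ?a + of_real (t^2) * cinner z (H *v z)"
          unfolding y_def
          by (simp only: cinner_add_left cinner_add_right matrix_vector_right_distrib
              cinner_scale_left cinner_scale_right mv_scale complex_cnj_complex_of_real)
             (simp add: power2_eq_square ring_distribs mult.assoc)
        then show ?thesis unfolding f_def \<mu>_def hx by simp
      qed
      have ny: "(norm y)^2 = 1 + t^2 * (norm z)^2"
      proof -
        have "cinner y y = cinner x0 x0 + of_real t * cinner x0 z + of_real t * cinner z x0
              + of_real (t^2) * cinner z z"
          unfolding y_def
          by (simp only: cinner_add_left cinner_add_right
              cinner_scale_left cinner_scale_right complex_cnj_complex_of_real)
             (simp add: power2_eq_square ring_distribs mult.assoc)
        then have "of_real ((norm y)^2) = (of_real (1 + t^2 * (norm z)^2) :: complex)"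
          by (simp add: cinner_self[symmetric] cx0 z0 zx0 del: of_real_power)
        then show ?thesis by (simp only: of_real_eq_iff)
      qed
      have "f y \<le> \<mu> * (norm y)^2" using bound[OF yS] .
      then show ?thesis using fy ny by (simp add: algebra_simps)
    qed
    then show ?thesis using quad_zero by blast
  qed
  have a0: "cinner z (H *v x0) = 0" if zS: "z \<in> S" and z0: "cinner x0 z = 0" for z
  proof -
    have r: "Re (cinner z (H *v x0)) = 0" using key[OF zS z0] .
    have "Re (cinner (\<i> *s z) (H *v x0)) = 0"
      using key[of "\<i> *s z"] csub_scale[OF S zS] z0 by (simp add: cinner_scale_right)
    then have i: "Im (cinner z (H *v x0)) = 0" by (simp add: cinner_scale_left)
    from r i show ?thesis by (simp add: complex_eq_iff)
  qed
  define c0 where "c0 = cinner x0 (H *v x0)"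
  define z where "z = H *v x0 - c0 *s x0"
  have zS: "z \<in> S" unfolding z_def using inv x0S S by (simp add: csub_diff csub_scale)
  have z0: "cinner x0 z = 0" unfolding z_def by (simp add: cinner_diff_right cinner_scale_right cx0 c0_def)
  have "cinner z z = cinner z (H *v x0) - c0 * cinner z x0"
    unfolding z_def by (simp add: cinner_diff_right cinner_scale_right)
  also have "\<dots> = 0" using a0[OF zS z0] z0 cinner_cnj[of x0 z] by simp
  finally have "z = 0" by simp
  then have "H *v x0 = c0 *s x0" unfolding z_def by simp
  moreover have "x0 \<noteq> 0" using nx0 by auto
  ultimately show ?thesis using x0S by blast
qed

lemma ctrans_ctrans[simp]: "ctrans (ctrans A) = A"
  by (simp add: ctrans_def vec_eq_iff)

lemma unit_eig:
  fixes g :: "complex^'n^'n"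
  assumes U1: "ctrans g ** g = mat 1" and ev: "g *v u = c *s u" and u0: "u \<noteq> 0"
  shows "cnj c * c = 1" "ctrans g *v u = cnj c *s u"
proof -
  have "cinner u ((ctrans g ** g) *v u) = cinner (g *v u) (g *v u)"
    unfolding matrix_vector_mul_assoc[symmetric] by (subst cinner_ctrans) simp
  then have "cinner (g *v u) (g *v u) = cinner u ((ctrans g ** g) *v u)" by simp
  also have "\<dots> = cinner u u" by (simp add: U1)
  finally have "cnj c * c * cinner u u = cinner u u"
    by (simp add: ev cinner_scale_left cinner_scale_right mult_ac)
  then have "cinner u u = 0 \<or> cnj c * c = 1" by (simp only: mult_cancel_right2)
  then show c1: "cnj c * c = 1" using u0 by simp
  have "u = (ctrans g ** g) *v u" by (simp add: U1)
  also have "\<dots> = c *s (ctrans g *v u)"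
    by (simp add: matrix_vector_mul_assoc[symmetric] ev mv_scale)
  finally have "cnj c *s u = (cnj c * c) *s (ctrans g *v u)"
    by (metis vector_smult_assoc)
  then show "ctrans g *v u = cnj c *s u" by (simp add: c1)
qed

lemma lin_comb_mv:
  "(\<chi> i j. a * M$i$j + b * N$i$j) *v x = a *s (M *v x) + b *s (N *v (x::complex^'n))"
  by (simp add: vec_eq_iff matrix_vector_mult_def sum_distrib_left sum.distrib algebra_simps)

lemma unitary_eig:
  fixes g :: "complex^'n^'n"
  assumes U1: "ctrans g ** g = mat 1" and U2: "g ** ctrans g = mat 1"
    and S: "csub S" and invg: "\<forall>x\<in>S. g *v x \<in> S" and invG: "\<forall>x\<in>S. ctrans g *v x \<in> S"
    and ne: "x1 \<in> S" "x1 \<noteq> 0"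
  shows "\<exists>x\<in>S. x \<noteq> 0 \<and> (\<exists>c. g *v x = c *s x)"
proof -
  define G where "G = ctrans g"
  define A where "A = (\<chi> i j. (1/2) * g$i$j + (1/2) * G$i$j)"
  define B where "B = (\<chi> i j. (-\<i>/2) * g$i$j + (\<i>/2) * G$i$j)"
  have Ax: "A *v x = (1/2) *s (g *v x) + (1/2) *s (G *v x)" for x
    unfolding A_def by (rule lin_comb_mv)
  have Bx: "B *v x = (-\<i>/2) *s (g *v x) + (\<i>/2) *s (G *v x)" for x
    unfolding B_def by (rule lin_comb_mv)
  have hA: "ctrans A = A" unfolding A_def G_def by (simp add: ctrans_def vec_eq_iff add.commute)
  have hB: "ctrans B = B" unfolding B_def G_def by (simp add: ctrans_def vec_eq_iff add.commute)
  have gx: "g *v x = A *v x + \<i> *s (B *v x)" for x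
    unfolding Ax Bx by (simp add: vec_eq_iff field_simps)
  have gG: "g *v (G *v x) = x" for x
    by (simp add: matrix_vector_mul_assoc G_def U2)
  have Gg: "G *v (g *v x) = x" for x
    by (simp add: matrix_vector_mul_assoc G_def U1)
  have AB: "A *v (B *v x) = B *v (A *v x)" for x
  proof -
    have "A *v (B *v x) = (-\<i>/4) *s (g *v (g *v x)) + (\<i>/4) *s (G *v (G *v x))"
      unfolding Ax Bx by (simp only: matrix_vector_right_distrib mv_scale gG Gg) (simp add: vec_eq_iff field_simps)
    also have "\<dots> = B *v (A *v x)"
      unfolding Ax Bx by (simp only: matrix_vector_right_distrib mv_scale gG Gg) (simp add: vec_eq_iff field_simps)
    finally show ?thesis .
  qed
  have invA: "\<forall>x\<in>S. A *v x \<in> S"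
    unfolding Ax G_def using S invg invG by (blast intro: csub_add csub_scale)
  have invB: "\<forall>x\<in>S. B *v x \<in> S"
    unfolding Bx G_def using S invg invG by (blast intro: csub_add csub_scale)
  obtain x2 \<mu> where x2: "x2 \<in> S" "x2 \<noteq> 0" "A *v x2 = \<mu> *s x2"
    using herm_eig[OF hA S invA ne] by blast
  define T where "T = {x\<in>S. A *v x = \<mu> *s x}"
  have T: "csub T"
    unfolding csub_def T_def using S
    by (auto simp: csub_0 csub_add csub_scale matrix_vector_right_distrib mv_scale
        vector_add_ldistrib vector_smult_assoc mult.commute)
  have invBT: "\<forall>x\<in>T. B *v x \<in> T"
    unfolding T_def using invB AB by (auto simp: mv_scale)
  obtain x \<nu> where x: "x \<in> T" "x \<noteq> 0" "B *v x = \<nu> *s x"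
    using herm_eig[OF hB T invBT, of x2] x2 unfolding T_def by blast
  have "g *v x = (\<mu> + \<i> * \<nu>) *s x"
    using x unfolding gx T_def by (simp add: vector_smult_assoc vector_sadd_rdistrib)
  then show ?thesis using x unfolding T_def by blast
qed

lemma spectral:
  fixes g :: "complex^'n^'n"
  assumes U1: "ctrans g ** g = mat 1" and U2: "g ** ctrans g = mat 1"
  shows "csub S \<Longrightarrow> (\<forall>x\<in>S. g *v x \<in> S) \<Longrightarrow> (\<forall>x\<in>S. ctrans g *v x \<in> S) \<Longrightarrow>
    \<exists>U. finite U \<and> U \<subseteq> S \<and> (\<forall>u\<in>U. cinner u u = 1 \<and> (\<exists>c. g *v u = c *s u)) \<and>
      (\<forall>u\<in>U. \<forall>v\<in>U. u \<noteq> v \<longrightarrow> cinner u v = 0) \<and> (\<forall>w\<in>S. w = (\<Sum>u\<in>U. cinner u w *s u))"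
proof (induction "dim S" arbitrary: S rule: less_induct)
  case less
  note S = less.prems(1) and invg = less.prems(2) and invG = less.prems(3)
  show ?case
  proof (cases "S = {0}")
    case True
    then show ?thesis by (intro exI[of _ "{}"]) auto
  next
    case False
    then obtain x1 where x1: "x1 \<in> S" "x1 \<noteq> 0" using csub_0[OF S] by blast
    obtain v0 c where v0: "v0 \<in> S" "v0 \<noteq> 0" "g *v v0 = c *s v0"
      using unitary_eig[OF U1 U2 S invg invG x1] by blast
    define r where "r = 1 / norm v0"
    define v where "v = of_real r *s v0"
    have vS: "v \<in> S" unfolding v_def by (rule csub_scale[OF S v0(1)])
    have "cinner v v = of_real r * (cnj (of_real r) * cinner v0 v0)"
      unfolding v_def by (simp only: cinner_scale_left cinner_scale_right)
    then have vv: "cinner v v = 1"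
      using v0(2) by (simp add: cinner_self r_def power2_eq_square)
    have v_ne: "v \<noteq> 0" using vv by auto
    have gv: "g *v v = c *s v"
      unfolding v_def by (simp add: mv_scale v0(3) vector_smult_assoc mult.commute)
    have Gv: "ctrans g *v v = cnj c *s v" by (rule unit_eig(2)[OF U1 gv v_ne])
    define S' where "S' = {w\<in>S. cinner v w = 0}"
    have S': "csub S'"
      unfolding csub_def S'_def using S
      by (auto simp: csub_0 csub_add csub_scale cinner_add_right cinner_scale_right)
    have invg': "\<forall>x\<in>S'. g *v x \<in> S'"
    proof
      fix x assume x: "x \<in> S'"
      have "cinner v (g *v x) = cinner (ctrans g *v v) x" by (rule cinner_ctrans)
      also have "\<dots> = 0" using x unfolding S'_def by (simp add: Gv cinner_scale_left)
      finally show "g *v x \<in> S'" using x invg unfolding S'_def by blast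
    qed
    have invG': "\<forall>x\<in>S'. ctrans g *v x \<in> S'"
    proof
      fix x assume x: "x \<in> S'"
      have "cinner v (ctrans g *v x) = cinner (ctrans (ctrans g) *v v) x" by (rule cinner_ctrans)
      also have "\<dots> = 0" using x unfolding S'_def by (simp add: gv cinner_scale_left)
      finally show "ctrans g *v x \<in> S'" using x invG unfolding S'_def by blast
    qed
    have sub: "subspace S" "subspace S'" using csub_subspace S S' by auto
    have "S' \<subseteq> S" unfolding S'_def by auto
    moreover have "v \<notin> S'" unfolding S'_def using vv by simp
    ultimately have "S' \<subset> S" using vS by blast
    then have "span S' \<subset> span S" using sub by (simp add: span_eq_iff[THEN iffD2])
    then have "dim S' < dim S" by (rule dim_psubset)
    from less.hyps[OF this S' invg' invG'] obtain U where
      U: "finite U" "U \<subseteq> S'" "\<forall>u\<in>U. cinner u u = 1 \<and> (\<exists>c. g *v u = c *s u)"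
         "\<forall>u\<in>U. \<forall>v\<in>U. u \<noteq> v \<longrightarrow> cinner u v = 0" "\<forall>w\<in>S'. w = (\<Sum>u\<in>U. cinner u w *s u)"
      by blast
    have vu: "cinner v u = 0" if "u \<in> U" for u using U(2) that unfolding S'_def by auto
    have uv: "cinner u v = 0" if "u \<in> U" for u using vu[OF that] cinner_cnj[of v u] by simp
    have vU: "v \<notin> U" using vu vv by force
    show ?thesis
    proof (intro exI[of _ "insert v U"] conjI)
      show "finite (insert v U)" using U(1) by simp
      show "insert v U \<subseteq> S" using U(2) vS unfolding S'_def by auto
      show "\<forall>u\<in>insert v U. cinner u u = 1 \<and> (\<exists>c. g *v u = c *s u)" using U(3) vv gv by auto
      show "\<forall>u\<in>insert v U. \<forall>w\<in>insert v U. u \<noteq> w \<longrightarrow> cinner u w = 0"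
        using U(4) vu uv by auto
      show "\<forall>w\<in>S. w = (\<Sum>u\<in>insert v U. cinner u w *s u)"
      proof
        fix w assume w: "w \<in> S"
        define w' where "w' = w - cinner v w *s v"
        have w'S: "w' \<in> S'"
          unfolding S'_def w'_def using w vS S
          by (simp add: csub_diff csub_scale cinner_diff_right cinner_scale_right vv)
        have cu: "cinner u w' = cinner u w" if "u \<in> U" for u
          unfolding w'_def by (simp add: cinner_diff_right cinner_scale_right uv[OF that])
        have "w = cinner v w *s v + w'" unfolding w'_def by simp
        also have "w' = (\<Sum>u\<in>U. cinner u w' *s u)" using U(5) w'S by blast
        also have "\<dots> = (\<Sum>u\<in>U. cinner u w *s u)" using cu by (intro sum.cong) auto
        finally show "w = (\<Sum>u\<in>insert v U. cinner u w *s u)"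
          using U(1) vU by (simp add: sum.insert)
      qed
    qed
  qed
qed

definition outer :: "complex \<Rightarrow> complex^'n \<Rightarrow> complex^'n^'n" where
  "outer c u = (\<chi> i j. c * u$i * cnj (u$j))"

lemma outer_mv: "outer c u *v w = (c * cinner u w) *s u"
  by (simp add: vec_eq_iff outer_def matrix_vector_mult_def cinner_def sum_distrib_left mult_ac)

lemma ctrans_outer: "ctrans (outer c u) = outer (cnj c) u"
  by (simp add: vec_eq_iff outer_def ctrans_def mult_ac)

lemma outer_neg: "outer (- c) u = - outer c u"
  by (simp add: vec_eq_iff outer_def)

lemma ctrans_add: "ctrans (A + B) = ctrans A + ctrans B"
  by (simp add: vec_eq_iff ctrans_def)

lemma ctrans_zero: "ctrans 0 = 0"
  by (simp add: vec_eq_iff ctrans_def)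

lemma ctrans_sum: "ctrans (\<Sum>u\<in>U. f u) = (\<Sum>u\<in>U. ctrans (f u))"
  by (induction U rule: infinite_finite_induct) (auto simp: ctrans_add ctrans_zero)

lemma sum_mv: "(\<Sum>u\<in>U. f u) *v w = (\<Sum>u\<in>U. f u *v (w::complex^'n))"
  by (induction U rule: infinite_finite_induct) (auto simp: matrix_vector_mult_add_rdistrib)

lemma sum_smult_left: "(\<Sum>u\<in>U. (c * f u) *s v u) = c *s (\<Sum>u\<in>U. f u *s (v u::complex^'n))"
  by (induction U rule: infinite_finite_induct) (auto simp: vector_add_ldistrib vector_smult_assoc)

theorem mainTheorem3:
  fixes g :: "complex^'n^'n"
  assumes "g \<in> unitary_group"
  shows "\<exists>\<zeta>\<in>unitary_lie_algebra. mexp \<zeta> = g \<and>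
           (\<forall>\<xi>\<in>unitary_lie_algebra. mexp \<xi> = g \<longrightarrow> mbracket \<zeta> \<xi> = 0)"
proof -
  have U1: "ctrans g ** g = mat 1" and U2: "g ** ctrans g = mat 1"
    using assms unfolding unitary_group_def by auto
  have csU: "csub (UNIV :: (complex^'n) set)" unfolding csub_def by auto
  have invU: "\<forall>x\<in>UNIV. g *v x \<in> UNIV" "\<forall>x\<in>UNIV. ctrans g *v x \<in> UNIV" by auto
  from spectral[OF U1 U2 csU invU] obtain U where U0: "finite U \<and> U \<subseteq> UNIV \<and>
     (\<forall>u\<in>U. cinner u u = 1 \<and> (\<exists>c. g *v u = c *s u)) \<and>
      (\<forall>u\<in>U. \<forall>v\<in>U. u \<noteq> v \<longrightarrow> cinner u v = 0) \<and> (\<forall>w\<in>UNIV. w = (\<Sum>u\<in>U. cinner u w *s u))" ..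
  have U4: "\<forall>w. w = (\<Sum>u\<in>U. cinner u w *s u)"
  proof
    fix w show "w = (\<Sum>u\<in>U. cinner u w *s u)"
      using conjunct2[OF conjunct2[OF conjunct2[OF conjunct2[OF U0]]]] by (rule bspec) simp
  qed
  note U = conjunct1[OF U0] conjunct1[OF conjunct2[OF conjunct2[OF U0]]]
     conjunct1[OF conjunct2[OF conjunct2[OF conjunct2[OF U0]]]] U4
  define ev where "ev u = cinner u (g *v u)" for u
  have uu1: "cinner u u = 1" if "u \<in> U" for u
    using bspec[OF U(2) that] by (rule conjunct1)
  have gu: "g *v u = ev u *s u" if uU: "u \<in> U" for u
  proof -
    obtain c where c: "g *v u = c *s u" using conjunct2[OF bspec[OF U(2) uU]] by (rule exE)
    have "ev u = c * cinner u u" unfolding ev_def c by (rule cinner_scale_right)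
    then have "ev u = c" using uu1[OF uU] by simp
    then show ?thesis using c by simp
  qed
  have u_ne: "u \<noteq> 0" if "u \<in> U" for u using uu1[OF that] by auto
  have ev1: "cnj (ev u) * ev u = 1" if "u \<in> U" for u
    using unit_eig(1)[OF U1 gu[OF that] u_ne[OF that]] .
  have Gu: "ctrans g *v u = cnj (ev u) *s u" if "u \<in> U" for u
    using unit_eig(2)[OF U1 gu[OF that] u_ne[OF that]] .
  have ev_ne: "ev u \<noteq> 0" if "u \<in> U" for u using ev1[OF that] by auto
  have norm_ev: "norm (ev u) = 1" if "u \<in> U" for u
  proof -
    have "of_real ((norm (ev u))^2) = (1::complex)"
      using ev1[OF that] by (simp add: complex_norm_square mult.commute del: of_real_power)
    then have "(norm (ev u))^2 = 1" by (simp only: of_real_eq_1_iff)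
    then show ?thesis using norm_ge_zero[of "ev u"] by (auto simp: power2_eq_1_iff)
  qed
  define L where "L u = Ln (ev u)" for u
  have expL: "exp (L u) = ev u" if "u \<in> U" for u unfolding L_def using ev_ne[OF that] by simp
  have cnjL: "cnj (L u) = - L u" if "u \<in> U" for u
  proof -
    have "Re (L u) = 0" unfolding L_def using ev_ne[OF that] norm_ev[OF that] by simp
    then show ?thesis by (simp add: complex_eq_iff)
  qed
  define \<zeta> where "\<zeta> = (\<Sum>u\<in>U. outer (L u) u)"
  have \<zeta>w: "\<zeta> *v w = (\<Sum>u\<in>U. (L u * cinner u w) *s u)" for w
    unfolding \<zeta>_def sum_mv outer_mv ..
  have \<zeta>eig: "\<zeta> *v w = Ln lam *s w" if gw: "g *v w = lam *s w" for w lam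
  proof -
    have "L u * cinner u w = Ln lam * cinner u w" if uU: "u \<in> U" for u
    proof -
      have "lam * cinner u w = cinner u (g *v w)" by (simp add: gw cinner_scale_right)
      also have "\<dots> = cinner (ctrans g *v u) w" by (rule cinner_ctrans)
      also have "\<dots> = ev u * cinner u w" by (simp add: Gu[OF uU] cinner_scale_left)
      finally have "(lam - ev u) * cinner u w = 0" by (simp add: algebra_simps)
      then have "cinner u w = 0 \<or> ev u = lam" by auto
      then show ?thesis unfolding L_def by auto
    qed
    then have "\<zeta> *v w = (\<Sum>u\<in>U. (Ln lam * cinner u w) *s u)"
      unfolding \<zeta>w by (intro sum.cong) auto
    also have "\<dots> = Ln lam *s (\<Sum>u\<in>U. cinner u w *s u)" by (rule sum_smult_left)
    also have "\<dots> = Ln lam *s w" by (simp only: U(4)[rule_format, of w, symmetric])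
    finally show ?thesis .
  qed
  have \<zeta>u: "\<zeta> *v u = L u *s u" if "u \<in> U" for u
    using \<zeta>eig[OF gu[OF that]] unfolding L_def .
  have skew: "\<zeta> \<in> unitary_lie_algebra"
  proof -
    have "ctrans \<zeta> = (\<Sum>u\<in>U. outer (cnj (L u)) u)"
      unfolding \<zeta>_def ctrans_sum ctrans_outer ..
    also have "\<dots> = (\<Sum>u\<in>U. - outer (L u) u)"
      by (intro sum.cong refl) (simp add: cnjL outer_neg)
    also have "\<dots> = - \<zeta>" unfolding \<zeta>_def by (simp add: sum_negf)
    finally show ?thesis unfolding unitary_lie_algebra_def by simp
  qed
  have mexp: "mexp \<zeta> = g"
  proof (rule vec_expand_eq[OF U(4)], intro ballI)
    fix u assume uU: "u \<in> U"
    have "mexp \<zeta> *v u = exp (L u) *s u" by (rule mexp_eig[OF \<zeta>u[OF uU]])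
    also have "\<dots> = g *v u" using expL[OF uU] gu[OF uU] by simp
    finally show "mexp \<zeta> *v u = g *v u" .
  qed
  have comm: "mbracket \<zeta> \<xi> = 0" if "mexp \<xi> = g" for \<xi>
  proof -
    have gx: "g ** \<xi> = \<xi> ** g" using mexp_commute[of \<xi>] that by simp
    have "\<zeta> ** \<xi> = \<xi> ** \<zeta>"
    proof (rule vec_expand_eq[OF U(4)], intro ballI)
      fix u assume uU: "u \<in> U"
      define w where "w = \<xi> *v u"
      have "g *v w = (g ** \<xi>) *v u" unfolding w_def by (simp add: matrix_vector_mul_assoc)
      also have "\<dots> = \<xi> *v (g *v u)" unfolding gx by (simp add: matrix_vector_mul_assoc)
      also have "\<dots> = ev u *s w" unfolding w_def gu[OF uU] by (simp add: mv_scale)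
      finally have "\<zeta> *v w = L u *s w" using \<zeta>eig unfolding L_def by blast
      then show "(\<zeta> ** \<xi>) *v u = (\<xi> ** \<zeta>) *v u"
        unfolding matrix_vector_mul_assoc[symmetric] \<zeta>u[OF uU] w_def by (simp add: mv_scale)
    qed
    then show ?thesis unfolding mbracket_def by simp
  qed
  show ?thesis using skew mexp comm by blast
qed

end
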